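(* Let $\Theta_1,\Theta_2,\ldots$ be independent random variables with $\mathbb P(\Theta_j\le\theta)=\theta/(\theta+j-1)$ for $\theta\ge0$ (convention $0/0=1$), and for fixed $n\ge1$ let $C_{n,\theta}$ be the composition of $n$ whose binary representation is $(1(\Theta_j\le\theta))_{1\le j\le n}$. Then $(C_{n,\theta},\theta\ge0)$ is a (time-inhomogeneous) Markov process whose transition rates are as follows: if at time $\theta$ the state is the composition encoded by a binary sequence (starting with $1$), then each $0$ in that sequence, located at place $j$, switches to $1$ at rate $1/(\theta+j-1)$, independently, and all other transition rates are zero.
   Context: A composition of $n$ is a sequence of positive integers $(n_1,\ldots,n_k)$ with sum $n$. Its binary representation is the length-$n$ 0/1 sequence formed by concatenating the words $10^{n_1-1},10^{n_2-1},\ldots,10^{n_k-1}$ (so the $1$'s sit at places $1,n_1+1,\ldots,n_1+\cdots+n_{k-1}+1$); every 0/1 sequence of length $n$ beginning with $1$ encodes a unique composition of $n$. *)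

theory Defs
  imports "HOL-Probability.Probability"
begin

definition is_composition :: "nat \<Rightarrow> nat list \<Rightarrow> bool" where
  "is_composition n c \<longleftrightarrow> (\<forall>k\<in>set c. 0 < k) \<and> sum_list c = n"

definition binary_rep :: "nat list \<Rightarrow> bool list" where
  "binary_rep c = concat (map (\<lambda>k. True # replicate (k - 1) False) c)"

definition theta_cdf :: "nat \<Rightarrow> real \<Rightarrow> real" where
  "theta_cdf j \<theta> = (if \<theta> + real j - 1 = 0 then 1 else \<theta> / (\<theta> + real j - 1))"

definition comp_proc :: "nat \<Rightarrow> (nat \<Rightarrow> 'a \<Rightarrow> real) \<Rightarrow> real \<Rightarrow> 'a \<Rightarrow> nat list" where
  "comp_proc n \<Theta> \<theta> \<omega> =
     (THE c. is_composition n c \<and> binary_rep c = map (\<lambda>j. \<Theta> j \<omega> \<le> \<theta>) [1..<n+1])"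

definition comp_rate :: "nat \<Rightarrow> real \<Rightarrow> nat list \<Rightarrow> nat list \<Rightarrow> real" where
  "comp_rate n \<theta> c c' =
     (if is_composition n c \<and> is_composition n c' then
        (\<Sum>j\<in>{1..n}. if \<not> binary_rep c ! (j - 1) \<and> binary_rep c' = (binary_rep c)[j - 1 := True]
                      then 1 / (\<theta> + real j - 1) else 0)
      else 0)"

text \<open>Markov property (discrete state space) of a process X indexed by the time set T:
  for times t_1 < ... < t_k < s < t in T, the conditional law of X_t given
  X_{t_1},...,X_{t_k},X_s equals that given X_s (stated multiplicatively, without division).\<close>

definition markov_process_on :: "'a measure \<Rightarrow> real set \<Rightarrow> (real \<Rightarrow> 'a \<Rightarrow> 's) \<Rightarrow> bool" where
  "markov_process_on M T X \<longleftrightarrow>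
     (\<forall>t\<in>T. \<forall>x. {\<omega>\<in>space M. X t \<omega> = x} \<in> sets M) \<and>
     (\<forall>ts xs s t x y. set ts \<subseteq> T \<and> s \<in> T \<and> t \<in> T \<and> sorted_wrt (<) (ts @ [s, t])
        \<and> length xs = length ts \<longrightarrow>
        measure M {\<omega>\<in>space M. (\<forall>i<length ts. X (ts!i) \<omega> = xs!i) \<and> X s \<omega> = x \<and> X t \<omega> = y}
          * measure M {\<omega>\<in>space M. X s \<omega> = x}
        = measure M {\<omega>\<in>space M. (\<forall>i<length ts. X (ts!i) \<omega> = xs!i) \<and> X s \<omega> = x}
          * measure M {\<omega>\<in>space M. X s \<omega> = x \<and> X t \<omega> = y})"

definition has_transition_rates ::
  "'a measure \<Rightarrow> real set \<Rightarrow> (real \<Rightarrow> 'a \<Rightarrow> 's) \<Rightarrow> (real \<Rightarrow> 's \<Rightarrow> 's \<Rightarrow> real) \<Rightarrow> bool" where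
  "has_transition_rates M T X q \<longleftrightarrow>
     (\<forall>\<theta>\<in>T. \<forall>x y. x \<noteq> y \<and> measure M {\<omega>\<in>space M. X \<theta> \<omega> = x} > 0 \<longrightarrow>
        ((\<lambda>h. measure M {\<omega>\<in>space M. X \<theta> \<omega> = x \<and> X (\<theta> + h) \<omega> = y}
               / measure M {\<omega>\<in>space M. X \<theta> \<omega> = x} / h) \<longlongrightarrow> q \<theta> x y) (at_right 0))"

end

theory Submission
  imports Defs
begin

lemma rep_Cons: "binary_rep (a # c) = True # replicate (a - 1) False @ binary_rep c"
  by (simp add: binary_rep_def)

lemma rep_Nil[simp]: "binary_rep [] = []"
  by (simp add: binary_rep_def)

lemma rep_length: "(\<forall>k\<in>set c. 0 < k) \<Longrightarrow> length (binary_rep c) = sum_list c"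
  by (induction c) (auto simp: rep_Cons)

lemma rep_hd: "binary_rep c = [] \<or> hd (binary_rep c)"
  by (cases c) (auto simp: rep_Cons)

lemma rep_decomp: "\<exists>k c. (\<forall>x\<in>set c. 0 < x) \<and> w = replicate k False @ binary_rep c"
proof (induction w)
  case Nil
  then show ?case by (intro exI[of _ 0] exI[of _ "[]"]) auto
next
  case (Cons b w)
  then obtain k c where kc: "\<forall>x\<in>set c. 0 < x" "w = replicate k False @ binary_rep c" by blast
  show ?case
  proof (cases b)
    case True
    then show ?thesis using kc by (intro exI[of _ 0] exI[of _ "Suc k # c"]) (auto simp: rep_Cons)
  next
    case False
    then show ?thesis using kc by (intro exI[of _ "Suc k"] exI[of _ c]) auto
  qed
qed

lemma rep_exists:
  assumes "w \<noteq> []" "hd w"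
  shows "\<exists>c. is_composition (length w) c \<and> binary_rep c = w"
proof -
  obtain k c where kc: "\<forall>x\<in>set c. 0 < x" "w = replicate k False @ binary_rep c"
    using rep_decomp by blast
  have "k = 0" using assms kc by (cases k) auto
  then show ?thesis using kc rep_length[of c] by (auto simp: is_composition_def)
qed

lemma repl_cancel:
  "replicate m False @ u = replicate m' False @ u' \<Longrightarrow> (u = [] \<or> hd u) \<Longrightarrow> (u' = [] \<or> hd u')
   \<Longrightarrow> m = m' \<and> u = u'"
proof (induction m arbitrary: m')
  case 0
  then show ?case by (cases m') auto
next
  case (Suc m)
  then show ?case by (cases m') auto
qed

lemma rep_inj: "(\<forall>k\<in>set c. 0 < k) \<Longrightarrow> (\<forall>k\<in>set c'. 0 < k) \<Longrightarrow> binary_rep c = binary_rep c' \<Longrightarrow> c = c'"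
proof (induction c arbitrary: c')
  case Nil
  then show ?case by (cases c') (auto simp: rep_Cons)
next
  case (Cons a c)
  then show ?case
  proof (cases c')
    case Nil
    then show ?thesis using Cons by (auto simp: rep_Cons)
  next
    case (Cons a' c'')
    have "replicate (a - 1) False @ binary_rep c = replicate (a' - 1) False @ binary_rep c''"
      using Cons.prems Cons by (simp add: rep_Cons)
    then have "a - 1 = a' - 1 \<and> binary_rep c = binary_rep c''"
      using repl_cancel rep_hd by blast
    then show ?thesis using Cons.prems Cons Cons.IH[of c''] by auto
  qed
qed

lemma comp_unique: "is_composition n c \<Longrightarrow> is_composition n c' \<Longrightarrow> binary_rep c = binary_rep c' \<Longrightarrow> c = c'"
  using rep_inj by (auto simp: is_composition_def)

lemma comp_length: "is_composition n c \<Longrightarrow> length (binary_rep c) = n"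
  using rep_length by (auto simp: is_composition_def)

lemma comp_first: "is_composition n c \<Longrightarrow> 1 \<le> n \<Longrightarrow> binary_rep c ! 0"
  by (cases c) (auto simp: is_composition_def rep_Cons)


lemma Lp[measurable]: "Measurable.pred borel (\<lambda>r::real. (r \<le> c) = b)"
  by (cases b) (simp_all add: not_le)

lemma nth_bits: "1 \<le> j \<Longrightarrow> j \<le> n \<Longrightarrow> map f [1..<n+1] ! (j-1) = f j"
  by (subst nth_map) (auto simp del: upt_Suc)

lemma aux_div: "(d1::real) > 0 \<Longrightarrow> d2 > 0 \<Longrightarrow> c > 0 \<Longrightarrow> (h * c / (d2 * d1)) / (c / d1) = h / d2"
  by (simp add: field_simps)

lemma aux_div2: "(d1::real) > 0 \<Longrightarrow> d2 > 0 \<Longrightarrow> c > 0 \<Longrightarrow> (c / d2) / (c / d1) = d1 / d2"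
  by (simp add: field_simps)

lemma tr: "(\<And>h. 0 < h \<Longrightarrow> f h = g h) \<Longrightarrow> (g \<longlongrightarrow> L) (at_right (0::real)) \<Longrightarrow> (f \<longlongrightarrow> L) (at_right 0)"
  by (subst tendsto_cong[where g = g]) (auto intro: eventually_mono[OF eventually_at_right_less])

locale cp = prob_space M for M :: "'a measure" +
  fixes \<Theta> :: "nat \<Rightarrow> 'a \<Rightarrow> real" and n :: nat
  assumes ind: "indep_vars (\<lambda>_. borel) \<Theta> {1..}"
    and cdf: "\<And>j \<theta>. 1 \<le> j \<Longrightarrow> 0 \<le> \<theta> \<Longrightarrow> prob {\<omega>\<in>space M. \<Theta> j \<omega> \<le> \<theta>} = theta_cdf j \<theta>"
    and n1: "1 \<le> n"
begin

lemma rv: "1 \<le> j \<Longrightarrow> \<Theta> j \<in> borel_measurable M"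
  using ind unfolding indep_vars_def2 by auto

lemma ev1: "1 \<le> j \<Longrightarrow> S \<in> sets borel \<Longrightarrow> {\<omega>\<in>space M. \<Theta> j \<omega> \<in> S} \<in> events"
  using measurable_sets[OF rv] by (simp add: vimage_def Int_def conj_commute)

lemma evJ: "(\<And>j. j\<in>{1..n} \<Longrightarrow> S j \<in> sets borel) \<Longrightarrow> {\<omega>\<in>space M. \<forall>j\<in>{1..n}. \<Theta> j \<omega> \<in> S j} \<in> events"
  by (rule sets.sets_Collect_finite_All') (use n1 ev1 in auto)

lemma prodP:
  assumes "\<And>j. j\<in>{1..n} \<Longrightarrow> S j \<in> sets borel"
  shows "prob {\<omega>\<in>space M. \<forall>j\<in>{1..n}. \<Theta> j \<omega> \<in> S j} = (\<Prod>j\<in>{1..n}. prob {\<omega>\<in>space M. \<Theta> j \<omega> \<in> S j})"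
proof -
  have I: "indep_sets (\<lambda>i. {\<Theta> i -` A \<inter> space M | A. A \<in> sets borel}) {1..}"
    using ind unfolding indep_vars_def2 by auto
  have "prob (\<Inter>j\<in>{1..n}. \<Theta> j -` S j \<inter> space M) = (\<Prod>j\<in>{1..n}. prob (\<Theta> j -` S j \<inter> space M))"
    by (rule indep_setsD[OF I]) (use n1 assms in auto)
  moreover have "(\<Inter>j\<in>{1..n}. \<Theta> j -` S j \<inter> space M) = {\<omega>\<in>space M. \<forall>j\<in>{1..n}. \<Theta> j \<omega> \<in> S j}"
    using n1 by auto
  moreover have "\<And>j. \<Theta> j -` S j \<inter> space M = {\<omega>\<in>space M. \<Theta> j \<omega> \<in> S j}" by auto
  ultimately show ?thesis by simp
qed

lemma ae1: "AE \<omega> in M. \<Theta> 1 \<omega> \<le> 0"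
proof -
  have "AE \<omega> in M. \<omega> \<in> {\<omega>\<in>space M. \<Theta> 1 \<omega> \<le> 0}"
    by (rule AE_prob_1) (simp add: cdf theta_cdf_def)
  then show ?thesis by (rule eventually_mono) auto
qed

lemma ae_eq:
  assumes "A \<in> events" "B \<in> events"
    and "\<And>\<omega>. \<omega> \<in> space M \<Longrightarrow> \<Theta> 1 \<omega> \<le> 0 \<Longrightarrow> \<omega> \<in> A \<longleftrightarrow> \<omega> \<in> B"
  shows "prob A = prob B"
proof (rule finite_measure_eq_AE[OF _ assms(1,2)])
  show "AE x in M. (x \<in> A) = (x \<in> B)"
    using ae1 AE_space by eventually_elim (use assms(3) in auto)
qed

lemma Xchar:
  assumes "\<Theta> 1 \<omega> \<le> 0" "0 \<le> \<tau>"
  shows "comp_proc n \<Theta> \<tau> \<omega> = x \<longleftrightarrow>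
     is_composition n x \<and> (\<forall>j\<in>{1..n}. (\<Theta> j \<omega> \<le> \<tau>) = binary_rep x ! (j-1))"
proof -
  define w where "w = map (\<lambda>j. \<Theta> j \<omega> \<le> \<tau>) [1..<n+1]"
  have lw: "length w = n" by (simp add: w_def)
  have wn: "w \<noteq> []" "hd w" using n1 assms by (auto simp: w_def hd_map upt_rec)
  obtain c where c: "is_composition n c" "binary_rep c = w"
    using rep_exists[OF wn] lw by auto
  have X: "comp_proc n \<Theta> \<tau> \<omega> = c"
    unfolding comp_proc_def w_def[symmetric]
    by (rule the_equality) (use c comp_unique in auto)
  have wj: "\<And>j. j\<in>{1..n} \<Longrightarrow> w ! (j-1) = (\<Theta> j \<omega> \<le> \<tau>)"
    by (auto simp: w_def nth_bits simp del: upt_Suc)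
  have "comp_proc n \<Theta> \<tau> \<omega> = x \<longleftrightarrow> is_composition n x \<and> binary_rep x = w"
    using X c comp_unique by auto
  also have "\<dots> \<longleftrightarrow> is_composition n x \<and> (\<forall>j\<in>{1..n}. (\<Theta> j \<omega> \<le> \<tau>) = binary_rep x ! (j-1))"
  proof (intro conj_cong refl)
    assume cx: "is_composition n x"
    have "binary_rep x = w \<longleftrightarrow> (\<forall>i<n. binary_rep x ! i = w ! i)"
      using comp_length[OF cx] lw by (auto simp: list_eq_iff_nth_eq)
    also have "\<dots> \<longleftrightarrow> (\<forall>j\<in>{1..n}. (\<Theta> j \<omega> \<le> \<tau>) = binary_rep x ! (j-1))"
    proof
      assume "\<forall>i<n. binary_rep x ! i = w ! i"
      then show "\<forall>j\<in>{1..n}. (\<Theta> j \<omega> \<le> \<tau>) = binary_rep x ! (j-1)"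
        using wj by (metis atLeastAtMost_iff diff_less less_le_trans zero_less_one)
    next
      assume H: "\<forall>j\<in>{1..n}. (\<Theta> j \<omega> \<le> \<tau>) = binary_rep x ! (j-1)"
      show "\<forall>i<n. binary_rep x ! i = w ! i"
      proof (intro allI impI)
        fix i assume "i < n"
        then have "Suc i \<in> {1..n}" by auto
        then show "binary_rep x ! i = w ! i" using H wj[of "Suc i"] by auto
      qed
    qed
    finally show "binary_rep x = w \<longleftrightarrow> (\<forall>j\<in>{1..n}. (\<Theta> j \<omega> \<le> \<tau>) = binary_rep x ! (j-1))" .
  qed
  finally show ?thesis .
qed

lemma Xpred[measurable]: "Measurable.pred M (\<lambda>\<omega>. comp_proc n \<Theta> \<tau> \<omega> = x)"
proof -
  define G where "G w = (THE c. is_composition n c \<and> binary_rep c = w)" for w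
  define W where "W = {w. set w \<subseteq> UNIV \<and> length w = n \<and> G w = x}"
  have fW: "finite W"
    by (rule finite_subset[OF _ finite_lists_length_eq[of "UNIV :: bool set" n]]) (auto simp: W_def)
  have eq: "{\<omega>\<in>space M. comp_proc n \<Theta> \<tau> \<omega> = x} =
     (\<Union>w\<in>W. {\<omega>\<in>space M. \<forall>j\<in>{1..n}. \<Theta> j \<omega> \<in> {r. (r \<le> \<tau>) = w ! (j-1)}})"
  proof (intro set_eqI iffI)
    fix \<omega> assume a: "\<omega> \<in> {\<omega>\<in>space M. comp_proc n \<Theta> \<tau> \<omega> = x}"
    define w where "w = map (\<lambda>j. \<Theta> j \<omega> \<le> \<tau>) [1..<n+1]"
    have "w \<in> W" using a by (auto simp: W_def w_def G_def comp_proc_def)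
    moreover have "\<forall>j\<in>{1..n}. \<Theta> j \<omega> \<in> {r. (r \<le> \<tau>) = w ! (j-1)}"
      by (auto simp: w_def nth_bits simp del: upt_Suc)
    ultimately show "\<omega> \<in> (\<Union>w\<in>W. {\<omega>\<in>space M. \<forall>j\<in>{1..n}. \<Theta> j \<omega> \<in> {r. (r \<le> \<tau>) = w ! (j-1)}})"
      using a by auto
  next
    fix \<omega> assume "\<omega> \<in> (\<Union>w\<in>W. {\<omega>\<in>space M. \<forall>j\<in>{1..n}. \<Theta> j \<omega> \<in> {r. (r \<le> \<tau>) = w ! (j-1)}})"
    then obtain w where w: "w \<in> W" "\<omega> \<in> space M" "\<forall>j\<in>{1..n}. (\<Theta> j \<omega> \<le> \<tau>) = w ! (j-1)" by auto
    have "map (\<lambda>j. \<Theta> j \<omega> \<le> \<tau>) [1..<n+1] = w"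
    proof (rule nth_equalityI)
      show "length (map (\<lambda>j. \<Theta> j \<omega> \<le> \<tau>) [1..<n+1]) = length w" using w by (auto simp: W_def)
      fix i assume "i < length (map (\<lambda>j. \<Theta> j \<omega> \<le> \<tau>) [1..<n+1])"
      then have "Suc i \<in> {1..n}" by (simp del: upt_Suc)
      then show "map (\<lambda>j. \<Theta> j \<omega> \<le> \<tau>) [1..<n+1] ! i = w ! i" using w(3) nth_bits[of "Suc i" n]
        by (auto simp del: upt_Suc)
    qed
    then show "\<omega> \<in> {\<omega>\<in>space M. comp_proc n \<Theta> \<tau> \<omega> = x}"
      using w by (auto simp: W_def G_def comp_proc_def)
  qed
  have "{\<omega>\<in>space M. comp_proc n \<Theta> \<tau> \<omega> = x} \<in> events"
    unfolding eq by (rule sets.finite_UN[OF fW]) (rule evJ, measurable)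
  then show ?thesis by (simp add: pred_def)
qed

lemma null_ev:
  assumes "A \<in> events" "\<And>\<omega>. \<omega> \<in> space M \<Longrightarrow> \<omega> \<in> A \<Longrightarrow> \<Theta> 1 \<omega> \<le> 0 \<Longrightarrow> False"
  shows "prob A = 0"
  using ae_eq[OF assms(1) sets.empty_sets] assms(2) by auto

lemma key_id:
  fixes p :: "real set \<Rightarrow> real"
  assumes "p {} = 0" "A \<inter> B = {} \<or> A \<inter> B = B \<or> B \<inter> C = {} \<or> B \<inter> C = B"
  shows "p (A \<inter> B \<inter> C) * p B = p (A \<inter> B) * p (B \<inter> C)"
proof -
  consider "A \<inter> B = {}" | "A \<inter> B = B" | "B \<inter> C = {}" | "B \<inter> C = B" using assms(2) by blast
  then show ?thesis
  proof cases
    case 1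
    then have "A \<inter> B \<inter> C = {}" by blast
    then show ?thesis using 1 assms(1) by simp
  next
    case 2
    then have "A \<inter> B \<inter> C = B \<inter> C" by blast
    then show ?thesis using 2 by simp
  next
    case 3
    then have "A \<inter> B \<inter> C = {}" by blast
    then show ?thesis using 3 assms(1) by simp
  next
    case 4
    then have "A \<inter> B \<inter> C = A \<inter> B" by blast
    then show ?thesis using 4 by simp
  qed
qed

lemma key_sets:
  fixes ts :: "real list" and a :: "nat \<Rightarrow> bool" and b c :: bool and m :: nat
  assumes "\<forall>i<m. ts ! i < s" "s < t"
  defines "A \<equiv> {r::real. \<forall>i<m. (r \<le> ts!i) = a i}"
    and "B \<equiv> {r::real. (r \<le> s) = b}" and "C \<equiv> {r::real. (r \<le> t) = c}"
  shows "A \<inter> B = {} \<or> A \<inter> B = B \<or> B \<inter> C = {} \<or> B \<inter> C = B"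
proof (cases b)
  case True
  then show ?thesis using assms(2) by (cases c) (auto simp: B_def C_def)
next
  case False
  show ?thesis
  proof (cases "\<exists>i<m. a i")
    case True
    then obtain i where "i < m" "a i" by auto
    then have "A \<inter> B = {}" using False assms(1) by (fastforce simp: A_def B_def)
    then show ?thesis by simp
  next
    case F2: False
    have "A \<inter> B = B" using False F2 assms(1) by (fastforce simp: A_def B_def)
    then show ?thesis by simp
  qed
qed

lemma markov: "markov_process_on M {0..} (comp_proc n \<Theta>)"
  unfolding markov_process_on_def
proof (intro conjI allI impI ballI)
  fix t :: real and x
  show "{\<omega> \<in> space M. comp_proc n \<Theta> t \<omega> = x} \<in> events"
    using Xpred[of t x] by (simp add: pred_def)
next
  fix ts :: "real list" and xs :: "nat list list" and s t :: real and x y :: "nat list"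
  assume H: "set ts \<subseteq> {0::real..} \<and> s \<in> {0..} \<and> t \<in> {0..} \<and> sorted_wrt (<) (ts @ [s, t]) \<and> length xs = length ts"
  let ?X = "comp_proc n \<Theta>"
  define m where "m = length ts"
  have tsl: "\<forall>i<m. ts ! i < s" and st: "s < t"
    using H by (auto simp: m_def sorted_wrt_append)
  have ts0: "\<forall>i<m. 0 \<le> ts ! i"
  proof (intro allI impI)
    fix i assume "i < m"
    then have "ts ! i \<in> set ts" by (simp add: m_def)
    then show "0 \<le> ts ! i" using H by auto
  qed
  have s0: "0 \<le> s" and t0: "0 \<le> t"
    using H by auto
  define E1 where "E1 = {\<omega>\<in>space M. (\<forall>i<length ts. ?X (ts!i) \<omega> = xs!i) \<and> ?X s \<omega> = x \<and> ?X t \<omega> = y}"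
  define E2 where "E2 = {\<omega>\<in>space M. ?X s \<omega> = x}"
  define E3 where "E3 = {\<omega>\<in>space M. (\<forall>i<length ts. ?X (ts!i) \<omega> = xs!i) \<and> ?X s \<omega> = x}"
  define E4 where "E4 = {\<omega>\<in>space M. ?X s \<omega> = x \<and> ?X t \<omega> = y}"
  have ev: "E1 \<in> events" "E2 \<in> events" "E3 \<in> events" "E4 \<in> events"
    unfolding E1_def E2_def E3_def E4_def by measurable
  have "prob E1 * prob E2 = prob E3 * prob E4"
  proof (cases "(\<forall>i<m. is_composition n (xs!i)) \<and> is_composition n x \<and> is_composition n y")
    case good: True
    define A where "A j = {r::real. \<forall>i<m. (r \<le> ts!i) = binary_rep (xs!i) ! (j-1)}" for j
    define B where "B j = {r::real. (r \<le> s) = binary_rep x ! (j-1)}" for j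
    define C where "C j = {r::real. (r \<le> t) = binary_rep y ! (j-1)}" for j
    define p where "p j S = prob {\<omega>\<in>space M. \<Theta> j \<omega> \<in> S}" for j S
    have Ab[measurable]: "A j \<in> sets borel" "B j \<in> sets borel" "C j \<in> sets borel" for j
      unfolding A_def B_def C_def by measurable
    have e: "\<And>\<omega> \<tau> z. \<Theta> 1 \<omega> \<le> 0 \<Longrightarrow> 0 \<le> \<tau> \<Longrightarrow> is_composition n z \<Longrightarrow>
        (?X \<tau> \<omega> = z) = (\<forall>j\<in>{1..n}. (\<Theta> j \<omega> \<le> \<tau>) = binary_rep z ! (j-1))"
      using Xchar by simp
    have gx: "is_composition n x" and gy: "is_composition n y"
      and gxs: "\<And>i. i < length ts \<Longrightarrow> is_composition n (xs!i)"
      and ts0': "\<And>i. i < length ts \<Longrightarrow> 0 \<le> ts!i"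
      using good ts0 by (auto simp: m_def)
    have P1: "prob E1 = (\<Prod>j\<in>{1..n}. p j (A j \<inter> B j \<inter> C j))"
    proof -
      have "prob E1 = prob {\<omega>\<in>space M. \<forall>j\<in>{1..n}. \<Theta> j \<omega> \<in> A j \<inter> B j \<inter> C j}"
        proof (rule ae_eq[OF ev(1) evJ])
          fix \<omega> assume "\<omega> \<in> space M" "\<Theta> 1 \<omega> \<le> 0"
          then show "\<omega> \<in> E1 \<longleftrightarrow> \<omega> \<in> {\<omega>\<in>space M. \<forall>j\<in>{1..n}. \<Theta> j \<omega> \<in> A j \<inter> B j \<inter> C j}"
            unfolding E1_def A_def B_def C_def m_def
            by (simp add: e gx gy gxs ts0' s0 t0; blast)
        qed (intro sets.Int Ab)
      also have "\<dots> = (\<Prod>j\<in>{1..n}. prob {\<omega>\<in>space M. \<Theta> j \<omega> \<in> A j \<inter> B j \<inter> C j})"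
        by (rule prodP) simp
      finally show ?thesis by (simp only: p_def)
    qed
    have P2: "prob E2 = (\<Prod>j\<in>{1..n}. p j (B j))"
    proof -
      have "prob E2 = prob {\<omega>\<in>space M. \<forall>j\<in>{1..n}. \<Theta> j \<omega> \<in> B j}"
        proof (rule ae_eq[OF ev(2) evJ])
          fix \<omega> assume "\<omega> \<in> space M" "\<Theta> 1 \<omega> \<le> 0"
          then show "\<omega> \<in> E2 \<longleftrightarrow> \<omega> \<in> {\<omega>\<in>space M. \<forall>j\<in>{1..n}. \<Theta> j \<omega> \<in> B j}"
            unfolding E2_def A_def B_def C_def m_def
            by (simp add: e gx gy gxs ts0' s0 t0; blast)
        qed (intro sets.Int Ab)
      also have "\<dots> = (\<Prod>j\<in>{1..n}. prob {\<omega>\<in>space M. \<Theta> j \<omega> \<in> B j})"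
        by (rule prodP) simp
      finally show ?thesis by (simp only: p_def)
    qed
    have P3: "prob E3 = (\<Prod>j\<in>{1..n}. p j (A j \<inter> B j))"
    proof -
      have "prob E3 = prob {\<omega>\<in>space M. \<forall>j\<in>{1..n}. \<Theta> j \<omega> \<in> A j \<inter> B j}"
        proof (rule ae_eq[OF ev(3) evJ])
          fix \<omega> assume "\<omega> \<in> space M" "\<Theta> 1 \<omega> \<le> 0"
          then show "\<omega> \<in> E3 \<longleftrightarrow> \<omega> \<in> {\<omega>\<in>space M. \<forall>j\<in>{1..n}. \<Theta> j \<omega> \<in> A j \<inter> B j}"
            unfolding E3_def A_def B_def C_def m_def
            by (simp add: e gx gy gxs ts0' s0 t0; blast)
        qed (intro sets.Int Ab)
      also have "\<dots> = (\<Prod>j\<in>{1..n}. prob {\<omega>\<in>space M. \<Theta> j \<omega> \<in> A j \<inter> B j})"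
        by (rule prodP) simp
      finally show ?thesis by (simp only: p_def)
    qed
    have P4: "prob E4 = (\<Prod>j\<in>{1..n}. p j (B j \<inter> C j))"
    proof -
      have "prob E4 = prob {\<omega>\<in>space M. \<forall>j\<in>{1..n}. \<Theta> j \<omega> \<in> B j \<inter> C j}"
        proof (rule ae_eq[OF ev(4) evJ])
          fix \<omega> assume "\<omega> \<in> space M" "\<Theta> 1 \<omega> \<le> 0"
          then show "\<omega> \<in> E4 \<longleftrightarrow> \<omega> \<in> {\<omega>\<in>space M. \<forall>j\<in>{1..n}. \<Theta> j \<omega> \<in> B j \<inter> C j}"
            unfolding E4_def A_def B_def C_def m_def
            by (simp add: e gx gy gxs ts0' s0 t0; blast)
        qed (intro sets.Int Ab)
      also have "\<dots> = (\<Prod>j\<in>{1..n}. prob {\<omega>\<in>space M. \<Theta> j \<omega> \<in> B j \<inter> C j})"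
        by (rule prodP) simp
      finally show ?thesis by (simp only: p_def)
    qed
    have K: "p j (A j \<inter> B j \<inter> C j) * p j (B j) = p j (A j \<inter> B j) * p j (B j \<inter> C j)" for j
      by (rule key_id) (auto simp: p_def A_def B_def C_def intro!: key_sets[OF tsl st])
    show ?thesis unfolding P1 P2 P3 P4 prod.distrib[symmetric] using K by simp
  next
    case bad: False
    show ?thesis
    proof (cases "is_composition n x")
      case False
      have "prob E2 = 0" "prob E3 = 0"
        by (rule null_ev[OF ev(2)], use False s0 in \<open>auto simp: E2_def Xchar\<close>)
           (rule null_ev[OF ev(3)], use False s0 in \<open>auto simp: E3_def Xchar\<close>)
      then show ?thesis by simp
    next
      case True
      show ?thesis
      proof (cases "is_composition n y")
        case False
        have "prob E1 = 0" "prob E4 = 0"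
          by (rule null_ev[OF ev(1)], use False t0 in \<open>auto simp: E1_def Xchar\<close>)
             (rule null_ev[OF ev(4)], use False t0 in \<open>auto simp: E4_def Xchar\<close>)
        then show ?thesis by simp
      next
        case True
        with bad \<open>is_composition n x\<close> obtain i where i: "i < m" "\<not> is_composition n (xs!i)" by auto
        have "prob E1 = 0" "prob E3 = 0"
          by (rule null_ev[OF ev(1)], use i ts0 in \<open>force simp: E1_def Xchar m_def\<close>)
             (rule null_ev[OF ev(3)], use i ts0 in \<open>force simp: E3_def Xchar m_def\<close>)
        then show ?thesis by simp
      qed
    qed
  qed
  then show "prob {\<omega> \<in> space M. (\<forall>i<length ts. ?X (ts ! i) \<omega> = xs ! i) \<and> ?X s \<omega> = x \<and> ?X t \<omega> = y} *
       prob {\<omega> \<in> space M. ?X s \<omega> = x} =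
       prob {\<omega> \<in> space M. (\<forall>i<length ts. ?X (ts ! i) \<omega> = xs ! i) \<and> ?X s \<omega> = x} *
       prob {\<omega> \<in> space M. ?X s \<omega> = x \<and> ?X t \<omega> = y}"
    unfolding E1_def E2_def E3_def E4_def .
qed

definition pj where "pj j S = prob {\<omega>\<in>space M. \<Theta> j \<omega> \<in> S}"

lemma F1: "0 \<le> \<tau> \<Longrightarrow> theta_cdf 1 \<tau> = 1"
  by (simp add: theta_cdf_def)

lemma F2: "2 \<le> j \<Longrightarrow> 0 \<le> \<tau> \<Longrightarrow> theta_cdf j \<tau> = \<tau> / (\<tau> + real j - 1)"
  by (simp add: theta_cdf_def)

lemma ev_le: "1 \<le> j \<Longrightarrow> {\<omega>\<in>space M. \<Theta> j \<omega> \<le> \<tau>} \<in> events"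
  using ev1[of j "{..\<tau>}"] by simp

lemma p_le: "1 \<le> j \<Longrightarrow> 0 \<le> \<tau> \<Longrightarrow> pj j {r. r \<le> \<tau>} = theta_cdf j \<tau>"
  by (simp add: pj_def cdf)

lemma p_gt: "1 \<le> j \<Longrightarrow> 0 \<le> \<tau> \<Longrightarrow> pj j {r. \<not> r \<le> \<tau>} = 1 - theta_cdf j \<tau>"
proof -
  assume a: "1 \<le> j" "0 \<le> \<tau>"
  have "{\<omega>\<in>space M. \<Theta> j \<omega> \<in> {r. \<not> r \<le> \<tau>}} = space M - {\<omega>\<in>space M. \<Theta> j \<omega> \<le> \<tau>}" by auto
  then show ?thesis using a by (simp add: pj_def prob_compl ev_le cdf)
qed

lemma p_int: "1 \<le> j \<Longrightarrow> 0 \<le> \<tau> \<Longrightarrow> \<tau> \<le> \<tau>' \<Longrightarrow>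
   pj j {r. \<tau> < r \<and> r \<le> \<tau>'} = theta_cdf j \<tau>' - theta_cdf j \<tau>"
proof -
  assume a: "1 \<le> j" "0 \<le> \<tau>" "\<tau> \<le> \<tau>'"
  have "{\<omega>\<in>space M. \<Theta> j \<omega> \<in> {r. \<tau> < r \<and> r \<le> \<tau>'}} =
      {\<omega>\<in>space M. \<Theta> j \<omega> \<le> \<tau>'} - {\<omega>\<in>space M. \<Theta> j \<omega> \<le> \<tau>}" by auto
  moreover have "prob ({\<omega>\<in>space M. \<Theta> j \<omega> \<le> \<tau>'} - {\<omega>\<in>space M. \<Theta> j \<omega> \<le> \<tau>}) =
      prob {\<omega>\<in>space M. \<Theta> j \<omega> \<le> \<tau>'} - prob {\<omega>\<in>space M. \<Theta> j \<omega> \<le> \<tau>}"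
    by (rule finite_measure_Diff) (use a ev_le in auto)
  ultimately show ?thesis using a by (simp add: pj_def cdf)
qed

definition rho where
  "rho \<theta> a b j h = (if a then (if b then 1 else 0) else
      (if b then h / (\<theta> + h + real j - 1) else (\<theta> + real j - 1) / (\<theta> + h + real j - 1)))"

lemma ratio:
  assumes "1 \<le> j" "0 \<le> \<theta>" "0 < h" "pj j {r. (r \<le> \<theta>) = a} \<noteq> 0" "\<not> a \<Longrightarrow> 2 \<le> j"
  shows "pj j ({r. (r \<le> \<theta>) = a} \<inter> {r. (r \<le> \<theta> + h) = b}) / pj j {r. (r \<le> \<theta>) = a} = rho \<theta> a b j h"
proof (cases a)
  case True
  show ?thesis
  proof (cases b)
    case b: True
    have "{r. (r \<le> \<theta>) = a} \<inter> {r. (r \<le> \<theta> + h) = b} = {r. (r \<le> \<theta>) = a}"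
      using True b assms(3) by auto
    then show ?thesis using assms(4) True b by (simp add: rho_def)
  next
    case b: False
    have "{r. (r \<le> \<theta>) = a} \<inter> {r. (r \<le> \<theta> + h) = b} = {}"
      using True b assms(3) by auto
    then show ?thesis using True b by (simp add: rho_def pj_def)
  qed
next
  case False
  then have j2: "2 \<le> j" using assms(5) by auto
  have pos: "0 < \<theta> + real j - 1" "0 < \<theta> + h + real j - 1" using j2 assms(2,3) by auto
  have pa: "pj j {r. (r \<le> \<theta>) = a} = (real j - 1) / (\<theta> + real j - 1)"
    using False p_gt[OF assms(1,2)] F2[OF j2 assms(2)] pos by (simp add: field_simps)
  show ?thesis
  proof (cases b)
    case b: True
    have "{r. (r \<le> \<theta>) = a} \<inter> {r. (r \<le> \<theta> + h) = b} = {r. \<theta> < r \<and> r \<le> \<theta> + h}"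
      using False b by auto
    moreover have "pj j {r. \<theta> < r \<and> r \<le> \<theta> + h} = (\<theta> + h) / (\<theta> + h + real j - 1) - \<theta> / (\<theta> + real j - 1)"
      using p_int[OF assms(1,2), of "\<theta> + h"] F2[OF j2 assms(2)] F2[OF j2, of "\<theta> + h"] assms(2,3) by simp
    moreover have "(\<theta> + h) / (\<theta> + h + real j - 1) - \<theta> / (\<theta> + real j - 1)
        = h * (real j - 1) / ((\<theta> + h + real j - 1) * (\<theta> + real j - 1))"
      using pos by (simp add: field_simps)
    moreover have "(h * (real j - 1) / ((\<theta> + h + real j - 1) * (\<theta> + real j - 1))) / ((real j - 1) / (\<theta> + real j - 1))
        = h / (\<theta> + h + real j - 1)"
      using pos j2 aux_div[of "\<theta> + real j - 1" "\<theta> + h + real j - 1" "real j - 1" h] by simp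
    ultimately show ?thesis using False b pa by (simp add: rho_def)
  next
    case b: False
    have "{r. (r \<le> \<theta>) = a} \<inter> {r. (r \<le> \<theta> + h) = b} = {r. \<not> r \<le> \<theta> + h}"
      using False b assms(3) by auto
    moreover have "pj j {r. \<not> r \<le> \<theta> + h} = 1 - (\<theta> + h) / (\<theta> + h + real j - 1)"
      using p_gt[OF assms(1), of "\<theta> + h"] F2[OF j2, of "\<theta> + h"] assms(2,3) by simp
    moreover have "1 - (\<theta> + h) / (\<theta> + h + real j - 1) = (real j - 1) / (\<theta> + h + real j - 1)"
      using pos by (simp add: field_simps)
    moreover have "((real j - 1) / (\<theta> + h + real j - 1)) / ((real j - 1) / (\<theta> + real j - 1))
        = (\<theta> + real j - 1) / (\<theta> + h + real j - 1)"
      using pos j2 aux_div2[of "\<theta> + real j - 1" "\<theta> + h + real j - 1" "real j - 1"] by simp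
    ultimately show ?thesis using False b pa by (simp add: rho_def)
  qed
qed

end

context cp begin
lemma rho_cont: "(\<not> a \<Longrightarrow> 0 < \<theta> + real j - 1) \<Longrightarrow> ((\<lambda>h. rho \<theta> a b j h) \<longlongrightarrow> rho \<theta> a b j 0) (at_right 0)"
proof (cases a)
  case True
  then show ?thesis by (simp add: rho_def)
next
  case False
  assume "\<not> a \<Longrightarrow> 0 < \<theta> + real j - 1"
  then have pos: "0 < \<theta> + real j - 1" using False by simp
  have "((\<lambda>h. h / (\<theta> + h + real j - 1)) \<longlongrightarrow> 0 / (\<theta> + 0 + real j - 1)) (at_right 0)"
    by (intro tendsto_intros) (use pos in auto)
  moreover have "((\<lambda>h. (\<theta> + real j - 1) / (\<theta> + h + real j - 1)) \<longlongrightarrow> (\<theta> + real j - 1) / (\<theta> + 0 + real j - 1)) (at_right 0)"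
    by (intro tendsto_intros) (use pos in auto)
  ultimately show ?thesis using False by (cases b) (simp_all add: rho_def)
qed

lemma rho0: "(\<not> a \<Longrightarrow> 0 < \<theta> + real j - 1) \<Longrightarrow> \<not> (a \<and> \<not> b) \<Longrightarrow> rho \<theta> a b j 0 = (if a = b then 1 else 0)"
  by (cases a; cases b) (auto simp: rho_def)


lemma rates: "has_transition_rates M {0..} (comp_proc n \<Theta>) (comp_rate n)"
  unfolding has_transition_rates_def
proof (intro ballI allI impI)
  let ?X = "comp_proc n \<Theta>"
  fix \<theta> :: real and x y :: "nat list"
  assume \<theta>0: "\<theta> \<in> {0..}" and H: "x \<noteq> y \<and> 0 < prob {\<omega>\<in>space M. ?X \<theta> \<omega> = x}"
  have t0: "0 \<le> \<theta>" using \<theta>0 by simp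
  have evx: "{\<omega>\<in>space M. ?X \<theta> \<omega> = x} \<in> events" by measurable
  have evxy: "{\<omega>\<in>space M. ?X \<theta> \<omega> = x \<and> ?X (\<theta> + h) \<omega> = y} \<in> events" for h by measurable
  have cx: "is_composition n x"
  proof (rule ccontr)
    assume "\<not> is_composition n x"
    then have "prob {\<omega>\<in>space M. ?X \<theta> \<omega> = x} = 0"
      by (intro null_ev[OF evx]) (use t0 Xchar in auto)
    then show False using H by simp
  qed
  show "((\<lambda>h. prob {\<omega>\<in>space M. ?X \<theta> \<omega> = x \<and> ?X (\<theta> + h) \<omega> = y} /
           prob {\<omega>\<in>space M. ?X \<theta> \<omega> = x} / h) \<longlongrightarrow> comp_rate n \<theta> x y) (at_right 0)"
  proof (cases "is_composition n y")
    case False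
    have z: "prob {\<omega>\<in>space M. ?X \<theta> \<omega> = x \<and> ?X (\<theta> + h) \<omega> = y} = 0" if "0 < h" for h
      by (intro null_ev[OF evxy]) (use t0 that Xchar[of _ "\<theta> + h" y] False in auto)
    have r0: "comp_rate n \<theta> x y = 0" using False by (simp add: comp_rate_def)
    show ?thesis by (rule tr[where g = "\<lambda>_. 0"]) (simp_all add: z r0)
  next
    case cy: True
    define xs where "xs = binary_rep x"
    define ys where "ys = binary_rep y"
    define a where "a j = xs ! (j - 1)" for j
    define b where "b j = ys ! (j - 1)" for j
    define B where "B j = {r::real. (r \<le> \<theta>) = a j}" for j
    define C where "C h j = {r::real. (r \<le> \<theta> + h) = b j}" for h j
    have lx: "length xs = n" and ly: "length ys = n"
      using comp_length cx cy by (auto simp: xs_def ys_def)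
    have e: "\<And>\<omega> \<tau> z. \<Theta> 1 \<omega> \<le> 0 \<Longrightarrow> 0 \<le> \<tau> \<Longrightarrow> is_composition n z \<Longrightarrow>
        (?X \<tau> \<omega> = z) = (\<forall>j\<in>{1..n}. (\<Theta> j \<omega> \<le> \<tau>) = binary_rep z ! (j-1))"
      using Xchar by simp
    have PB: "prob {\<omega>\<in>space M. ?X \<theta> \<omega> = x} = (\<Prod>j\<in>{1..n}. pj j (B j))"
    proof -
      have "prob {\<omega>\<in>space M. ?X \<theta> \<omega> = x} = prob {\<omega>\<in>space M. \<forall>j\<in>{1..n}. \<Theta> j \<omega> \<in> B j}"
      proof (rule ae_eq[OF evx evJ])
        fix \<omega> assume "\<omega> \<in> space M" "\<Theta> 1 \<omega> \<le> 0"
        then show "\<omega> \<in> {\<omega>\<in>space M. ?X \<theta> \<omega> = x} \<longleftrightarrow> \<omega> \<in> {\<omega>\<in>space M. \<forall>j\<in>{1..n}. \<Theta> j \<omega> \<in> B j}"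
          unfolding B_def a_def xs_def by (simp add: e cx t0)
      qed (unfold B_def, measurable)
      also have "\<dots> = (\<Prod>j\<in>{1..n}. prob {\<omega>\<in>space M. \<Theta> j \<omega> \<in> B j})"
        by (rule prodP) (unfold B_def, measurable)
      finally show ?thesis by (simp only: pj_def)
    qed
    have PBC: "prob {\<omega>\<in>space M. ?X \<theta> \<omega> = x \<and> ?X (\<theta> + h) \<omega> = y} = (\<Prod>j\<in>{1..n}. pj j (B j \<inter> C h j))"
      if h0: "0 < h" for h
    proof -
      have "prob {\<omega>\<in>space M. ?X \<theta> \<omega> = x \<and> ?X (\<theta> + h) \<omega> = y} = prob {\<omega>\<in>space M. \<forall>j\<in>{1..n}. \<Theta> j \<omega> \<in> B j \<inter> C h j}"
      proof (rule ae_eq[OF evxy evJ])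
        fix \<omega> assume "\<omega> \<in> space M" "\<Theta> 1 \<omega> \<le> 0"
        then show "\<omega> \<in> {\<omega>\<in>space M. ?X \<theta> \<omega> = x \<and> ?X (\<theta> + h) \<omega> = y} \<longleftrightarrow> \<omega> \<in> {\<omega>\<in>space M. \<forall>j\<in>{1..n}. \<Theta> j \<omega> \<in> B j \<inter> C h j}"
          unfolding B_def C_def a_def b_def xs_def ys_def using h0 t0 by (simp add: e cx cy; blast)
      qed (unfold B_def C_def, measurable)
      also have "\<dots> = (\<Prod>j\<in>{1..n}. prob {\<omega>\<in>space M. \<Theta> j \<omega> \<in> B j \<inter> C h j})"
        by (rule prodP) (unfold B_def C_def, measurable)
      finally show ?thesis by (simp only: pj_def)
    qed
    have nz: "pj j (B j) \<noteq> 0" if "j \<in> {1..n}" for j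
    proof -
      have "(\<Prod>j\<in>{1..n}. pj j (B j)) \<noteq> 0" using H PB by (metis less_irrefl)
      then show ?thesis using that by (metis finite_atLeastAtMost prod_zero_iff)
    qed
    have a1: "a 1" using comp_first[OF cx n1] by (simp add: a_def xs_def)
    have j2: "2 \<le> j" if "j \<in> {1..n}" "\<not> a j" for j
      using that a1 by (cases "j = 1") auto
    define g where "g h = (\<Prod>j\<in>{1..n}. rho \<theta> (a j) (b j) j h) / h" for h
    have fg: "prob {\<omega>\<in>space M. ?X \<theta> \<omega> = x \<and> ?X (\<theta> + h) \<omega> = y} / prob {\<omega>\<in>space M. ?X \<theta> \<omega> = x} / h = g h"
      if h0: "0 < h" for h
    proof -
      have "(\<Prod>j\<in>{1..n}. pj j (B j \<inter> C h j)) / (\<Prod>j\<in>{1..n}. pj j (B j)) =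
          (\<Prod>j\<in>{1..n}. pj j (B j \<inter> C h j) / pj j (B j))"
        by (simp add: prod_dividef)
      also have "\<dots> = (\<Prod>j\<in>{1..n}. rho \<theta> (a j) (b j) j h)"
      proof (rule prod.cong[OF refl])
        fix j assume j: "j \<in> {1..n}"
        show "pj j (B j \<inter> C h j) / pj j (B j) = rho \<theta> (a j) (b j) j h"
          unfolding B_def C_def
          by (rule ratio) (use j t0 h0 nz[OF j] j2[OF j] in \<open>auto simp: B_def\<close>)
      qed
      finally show ?thesis using PB PBC[OF h0] by (simp add: g_def)
    qed
    have rate: "comp_rate n \<theta> x y = (\<Sum>j\<in>{1..n}. if \<not> a j \<and> ys = xs[j - 1 := True] then 1 / (\<theta> + real j - 1) else 0)"
      by (simp add: comp_rate_def cx cy a_def xs_def ys_def)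
    have "(g \<longlongrightarrow> comp_rate n \<theta> x y) (at_right 0)"
    proof (cases "\<exists>j\<in>{1..n}. a j \<and> \<not> b j")
      case True
      then obtain j0 where j0: "j0 \<in> {1..n}" "a j0" "\<not> b j0" by blast
      have g0: "g h = 0" for h
      proof -
        have "(\<Prod>j\<in>{1..n}. rho \<theta> (a j) (b j) j h) = 0"
          by (rule prod_zero) (use j0 in \<open>auto simp: rho_def\<close>)
        then show ?thesis by (simp add: g_def)
      qed
      have r0: "comp_rate n \<theta> x y = 0"
        unfolding rate
      proof (rule sum.neutral, rule ballI)
        fix i assume i: "i \<in> {1..n}"
        have "ys \<noteq> xs[i - 1 := True]"
        proof
          assume "ys = xs[i - 1 := True]"
          then have "ys ! (j0 - 1) = xs[i - 1 := True] ! (j0 - 1)" by simp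
          also have "\<dots> = True"
          proof -
            have "j0 - 1 < length xs" using j0 lx by auto
            then show ?thesis using j0 by (cases "i - 1 = j0 - 1") (auto simp: a_def)
          qed
          finally show False using j0 by (simp add: b_def)
        qed
        then show "(if \<not> a i \<and> ys = xs[i - 1 := True] then 1 / (\<theta> + real i - 1) else 0) = 0" by simp
      qed
      have "g = (\<lambda>_. 0)" using g0 by auto
      then show ?thesis using r0 by simp
    next
      case False
      then have nab: "\<And>j. j \<in> {1..n} \<Longrightarrow> a j \<Longrightarrow> b j" by auto
      have "xs \<noteq> ys" using H cx cy comp_unique by (auto simp: xs_def ys_def)
      then obtain i where i: "i < n" "xs ! i \<noteq> ys ! i" using lx ly by (auto simp: list_eq_iff_nth_eq)
      define k where "k = Suc i"
      have k: "k \<in> {1..n}" using i by (simp add: k_def)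
      have abk: "a k \<noteq> b k" using i by (simp add: k_def a_def b_def)
      then have nak: "\<not> a k" and bk: "b k" using nab[OF k] by auto
      have k2: "2 \<le> k" using j2[OF k nak] .
      have posk: "0 < \<theta> + real k - 1" using k2 t0 by simp
      define P where "P h = (\<Prod>j\<in>{1..n}-{k}. rho \<theta> (a j) (b j) j h)" for h
      have geq: "g h = (1 / (\<theta> + h + real k - 1)) * P h" if h0: "0 < h" for h
      proof -
        have "(\<Prod>j\<in>{1..n}. rho \<theta> (a j) (b j) j h) = rho \<theta> (a k) (b k) k h * P h"
          unfolding P_def by (rule prod.remove) (use k in auto)
        also have "rho \<theta> (a k) (b k) k h = h / (\<theta> + h + real k - 1)"
          using nak bk by (simp add: rho_def)
        finally show ?thesis using h0 posk by (simp add: g_def field_simps)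
      qed
      have cont: "((\<lambda>h. (1 / (\<theta> + h + real k - 1)) * P h) \<longlongrightarrow> (1 / (\<theta> + 0 + real k - 1)) * P 0) (at_right 0)"
      proof (rule tendsto_mult)
        show "((\<lambda>h. 1 / (\<theta> + h + real k - 1)) \<longlongrightarrow> 1 / (\<theta> + 0 + real k - 1)) (at_right 0)"
          by (intro tendsto_intros) (use posk in auto)
        show "(P \<longlongrightarrow> P 0) (at_right 0)"
          unfolding P_def
          by (rule tendsto_prod, rule rho_cont) (use j2 t0 in force)
      qed
      have r0: "\<And>j. j \<in> {1..n} - {k} \<Longrightarrow> rho \<theta> (a j) (b j) j 0 = (if a j = b j then 1 else 0)"
        by (rule rho0) (use j2 t0 nab in force)+
      have L: "(1 / (\<theta> + 0 + real k - 1)) * P 0 = comp_rate n \<theta> x y"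
      proof (cases "\<forall>j\<in>{1..n}-{k}. a j = b j")
        case True
        have P1: "P 0 = 1" unfolding P_def by (rule prod.neutral) (use True r0 in auto)
        have ysx: "ys = xs[k - 1 := True]"
        proof (rule nth_equalityI)
          show "length ys = length (xs[k - 1 := True])" using lx ly by simp
          fix i' assume "i' < length ys"
          then have i': "i' < n" using ly by simp
          show "ys ! i' = xs[k - 1 := True] ! i'"
          proof (cases "i' = k - 1")
            case True
            then show ?thesis using bk lx i' by (simp add: b_def)
          next
            case False
            then have "Suc i' \<in> {1..n} - {k}" using i' k by auto
            then have "a (Suc i') = b (Suc i')" using \<open>\<forall>j\<in>{1..n}-{k}. a j = b j\<close> by blast
            then show ?thesis using False by (simp add: a_def b_def)
          qed
        qed
        have "comp_rate n \<theta> x y = (if \<not> a k \<and> ys = xs[k - 1 := True] then 1 / (\<theta> + real k - 1) else 0) +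
             (\<Sum>j\<in>{1..n}-{k}. if \<not> a j \<and> ys = xs[j - 1 := True] then 1 / (\<theta> + real j - 1) else 0)"
          unfolding rate by (rule sum.remove) (use k in auto)
        also have "(\<Sum>j\<in>{1..n}-{k}. if \<not> a j \<and> ys = xs[j - 1 := True] then 1 / (\<theta> + real j - 1) else 0) = 0"
        proof (rule sum.neutral, rule ballI)
          fix j assume j: "j \<in> {1..n} - {k}"
          have "ys \<noteq> xs[j - 1 := True]"
          proof
            assume "ys = xs[j - 1 := True]"
            then have "ys ! (k - 1) = xs[j - 1 := True] ! (k - 1)" by simp
            also have "\<dots> = xs ! (k - 1)" using j k by (auto simp: nth_list_update)
            finally show False using abk by (simp add: a_def b_def)
          qed
          then show "(if \<not> a j \<and> ys = xs[j - 1 := True] then 1 / (\<theta> + real j - 1) else 0) = 0" by simp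
        qed
        finally show ?thesis using P1 nak ysx by simp
      next
        case False
        then obtain j0 where j0: "j0 \<in> {1..n} - {k}" "a j0 \<noteq> b j0" by blast
        have P0: "P 0 = 0" unfolding P_def by (rule prod_zero) (use j0 r0 in force)+
        have "comp_rate n \<theta> x y = 0"
          unfolding rate
        proof (rule sum.neutral, rule ballI)
          fix j assume j: "j \<in> {1..n}"
          have "ys \<noteq> xs[j - 1 := True]"
          proof
            assume ysj: "ys = xs[j - 1 := True]"
            have "k - 1 = j - 1"
            proof (rule ccontr)
              assume "k - 1 \<noteq> j - 1"
              then have "ys ! (k - 1) = xs ! (k - 1)" using ysj by simp
              then show False using abk by (simp add: a_def b_def)
            qed
            moreover have "j0 - 1 = j - 1"
            proof (rule ccontr)
              assume "j0 - 1 \<noteq> j - 1"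
              then have "ys ! (j0 - 1) = xs ! (j0 - 1)" using ysj by simp
              then show False using j0 by (simp add: a_def b_def)
            qed
            ultimately show False using j0 k by auto
          qed
          then show "(if \<not> a j \<and> ys = xs[j - 1 := True] then 1 / (\<theta> + real j - 1) else 0) = 0" by simp
        qed
        then show ?thesis using P0 by simp
      qed
      show ?thesis using tr[OF geq cont] L by simp
    qed
    then show ?thesis by (rule tr[rotated]) (rule fg)
  qed
qed

end

theorem corollary3:
  fixes M :: "'a measure" and \<Theta> :: "nat \<Rightarrow> 'a \<Rightarrow> real" and n :: nat
  assumes "prob_space M"
    and "prob_space.indep_vars M (\<lambda>_. borel) \<Theta> {1..}"
    and "\<And>j \<theta>. 1 \<le> j \<Longrightarrow> 0 \<le> \<theta> \<Longrightarrow> measure M {\<omega>\<in>space M. \<Theta> j \<omega> \<le> \<theta>} = theta_cdf j \<theta>"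
    and "1 \<le> n"
  shows "markov_process_on M {0..} (comp_proc n \<Theta>)
         \<and> has_transition_rates M {0..} (comp_proc n \<Theta>) (comp_rate n)"
proof -
  interpret cp M \<Theta> n
    using assms unfolding cp_def cp_axioms_def by auto
  show ?thesis using markov rates by simp
qed

end
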